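(* Let $\mathcal V$ be a finite set, $2\le k\le|\mathcal V|-2$, and suppose that the code $\Gamma\subset\binom{\mathcal V}{k}$ admits a subgroup $G\le{\rm Aut}(\Gamma)\cap{\rm Sym}(\mathcal V)$ such that $\Gamma$ is $G$-neighbour-transitive and $G$ is intransitive on $\mathcal V$. Then there is a proper non-empty subset $\mathcal U\subset\mathcal V$ such that: $\Gamma$ is the set of all $k$-subsets of $\mathcal U$ if $|\mathcal U|>k$; $\Gamma=\{\mathcal U\}$ if $|\mathcal U|=k$; $\Gamma$ is the set of all $k$-subsets of $\mathcal V$ containing $\mathcal U$ if $|\mathcal U|<k$.
   Context: The Johnson graph $J(|\mathcal V|,k)$ has vertex set $\binom{\mathcal V}{k}$, the $k$-subsets of $\mathcal V$, two being adjacent iff they meet in $k-1$ points. A code is a proper non-empty subset $\Gamma\subset\binom{\mathcal V}{k}$; its neighbour set $\Gamma_1$ is the set of $k$-subsets not in $\Gamma$ adjacent to some codeword. ${\rm Aut}(\Gamma)$ is the setwise stabiliser of $\Gamma$ in ${\rm Aut}(J(|\mathcal V|,k))$. $\Gamma$ is $G$-neighbour-transitive if $G$ is transitive on both $\Gamma$ and $\Gamma_1$. *)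

theory Defs
  imports "HOL-Combinatorics.Permutations"
begin

definition ksubsets :: "'a set \<Rightarrow> nat \<Rightarrow> 'a set set" where
  "ksubsets V k = {S. S \<subseteq> V \<and> card S = k}"

definition johnson_adj :: "nat \<Rightarrow> 'a set \<Rightarrow> 'a set \<Rightarrow> bool" where
  "johnson_adj k S T \<longleftrightarrow> card (S \<inter> T) = k - 1"

definition is_code :: "'a set \<Rightarrow> nat \<Rightarrow> 'a set set \<Rightarrow> bool" where
  "is_code V k \<Gamma> \<longleftrightarrow> \<Gamma> \<subseteq> ksubsets V k \<and> \<Gamma> \<noteq> {} \<and> \<Gamma> \<noteq> ksubsets V k"

definition neighbour_set :: "'a set \<Rightarrow> nat \<Rightarrow> 'a set set \<Rightarrow> 'a set set" where
  "neighbour_set V k \<Gamma> =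
     {T \<in> ksubsets V k. T \<notin> \<Gamma> \<and> (\<exists>S\<in>\<Gamma>. johnson_adj k S T)}"

definition perm_group_on :: "'a set \<Rightarrow> ('a \<Rightarrow> 'a) set \<Rightarrow> bool" where
  "perm_group_on V G \<longleftrightarrow> (\<forall>g\<in>G. g permutes V) \<and> id \<in> G \<and>
     (\<forall>g\<in>G. \<forall>h\<in>G. g \<circ> h \<in> G) \<and> (\<forall>g\<in>G. inv g \<in> G)"

text \<open>G stabilises the code setwise (G \<le> Aut(Gamma), acting on k-subsets by images).\<close>
definition stabilises :: "('a \<Rightarrow> 'a) set \<Rightarrow> 'a set set \<Rightarrow> bool" where
  "stabilises G \<Gamma> \<longleftrightarrow> (\<forall>g\<in>G. (\<lambda>S. g ` S) ` \<Gamma> = \<Gamma>)"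

definition set_transitive :: "('a \<Rightarrow> 'a) set \<Rightarrow> 'a set set \<Rightarrow> bool" where
  "set_transitive G X \<longleftrightarrow> (\<forall>S\<in>X. \<forall>T\<in>X. \<exists>g\<in>G. g ` S = T)"

definition neighbour_transitive :: "'a set \<Rightarrow> nat \<Rightarrow> ('a \<Rightarrow> 'a) set \<Rightarrow> 'a set set \<Rightarrow> bool" where
  "neighbour_transitive V k G \<Gamma> \<longleftrightarrow>
     set_transitive G \<Gamma> \<and> set_transitive G (neighbour_set V k \<Gamma>)"

definition point_transitive :: "('a \<Rightarrow> 'a) set \<Rightarrow> 'a set \<Rightarrow> bool" where
  "point_transitive G V \<longleftrightarrow> (\<forall>x\<in>V. \<forall>y\<in>V. \<exists>g\<in>G. g x = y)"

end

theory Submission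
  imports Defs
begin

lemma conn_aux:
  assumes fin: "finite V"
    and sub: "A \<subseteq> {S. S \<subseteq> V \<and> card S = k \<and> U \<subseteq> S}"
    and closed: "\<forall>S\<in>A. \<forall>a\<in>S-U. \<forall>b\<in>V-S. insert b (S-{a}) \<in> A"
    and T: "T \<subseteq> V" "card T = k" "U \<subseteq> T"
  shows "\<forall>S\<in>A. card (S - T) = n \<longrightarrow> T \<in> A"
proof (induction n)
  case 0
  show ?case
  proof (intro ballI impI)
    fix S assume S: "S \<in> A" "card (S - T) = 0"
    have fS': "S \<subseteq> V" "card S = k" using S(1) sub by auto
    have fS: "finite S" using fS'(1) fin by (rule finite_subset)
    have fT: "finite T" using T(1) fin by (rule finite_subset)
    have "S - T = {}" using S(2) fS by simp
    hence "S \<subseteq> T" by blast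
    hence "S = T" using card_subset_eq[OF fT, of S] fS' T(2) by simp
    thus "T \<in> A" using S by simp
  qed
next
  case (Suc n)
  show ?case
  proof (intro ballI impI)
    fix S assume S: "S \<in> A" "card (S - T) = Suc n"
    have fS': "S \<subseteq> V" "card S = k" "U \<subseteq> S" using S(1) sub by auto
    have fS1: "finite S" using fS'(1) fin by (rule finite_subset)
    note fS = fS1 fS'
    have fT: "finite T" using T(1) fin by (rule finite_subset)
    have "S - T \<noteq> {}" using S(2) by (intro notI) simp
    then obtain a where a: "a \<in> S - T" by blast
    have "T - S \<noteq> {}"
    proof
      assume "T - S = {}"
      hence "T \<subseteq> S" by blast
      hence "T = S" using card_subset_eq[OF fS(1), of T] fS T by simp
      thus False using a by blast
    qed
    then obtain b where b: "b \<in> T - S" by blast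
    have aU: "a \<in> S - U" using a T by blast
    have bV: "b \<in> V - S" using b T by blast
    have S': "insert b (S-{a}) \<in> A" using closed S(1) aU bV by blast
    have "insert b (S-{a}) - T = (S - T) - {a}" using b by blast
    hence "card (insert b (S-{a}) - T) = n" using S(2) a fS(1) by simp
    thus "T \<in> A" using Suc.IH S' by blast
  qed
qed

lemma conn:
  assumes fin: "finite V" and ne: "A \<noteq> {}"
    and sub: "A \<subseteq> {S. S \<subseteq> V \<and> card S = k \<and> U \<subseteq> S}"
    and closed: "\<forall>S\<in>A. \<forall>a\<in>S-U. \<forall>b\<in>V-S. insert b (S-{a}) \<in> A"
  shows "A = {S. S \<subseteq> V \<and> card S = k \<and> U \<subseteq> S}"
proof
  show "A \<subseteq> {S. S \<subseteq> V \<and> card S = k \<and> U \<subseteq> S}" by (rule sub)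
  show "{S. S \<subseteq> V \<and> card S = k \<and> U \<subseteq> S} \<subseteq> A"
  proof
    fix T assume "T \<in> {S. S \<subseteq> V \<and> card S = k \<and> U \<subseteq> S}"
    hence T: "T \<subseteq> V" "card T = k" "U \<subseteq> T" by auto
    obtain S where "S \<in> A" using ne by blast
    thus "T \<in> A" using conn_aux[OF fin sub closed T, of "card (S - T)"] by blast
  qed
qed

lemma swap_card:
  assumes "finite S" "a \<in> S" "b \<notin> S"
  shows "card (insert b (S - {a})) = card S"
    and "card (S \<inter> insert b (S - {a})) = card S - 1"
proof -
  have "card S > 0" using assms card_gt_0_iff by blast
  thus "card (insert b (S - {a})) = card S" using assms by (simp add: card_insert_if)
  have "S \<inter> insert b (S - {a}) = S - {a}" using assms by blast
  thus "card (S \<inter> insert b (S - {a})) = card S - 1" using assms by simp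
qed

lemma ks_single: "finite W \<Longrightarrow> ksubsets W (card W) = {W}"
proof -
  assume f: "finite W"
  have "S = W" if "S \<subseteq> W" "card S = card W" for S using card_subset_eq[OF f that] .
  thus ?thesis unfolding ksubsets_def by auto
qed

lemma ks_single2: "finite V \<Longrightarrow> W \<subseteq> V \<Longrightarrow> {S \<in> ksubsets V (card W). W \<subseteq> S} = {W}"
  unfolding ksubsets_def
proof (intro equalityI subsetI)
  fix S assume "finite V" "W \<subseteq> V" "S \<in> {S \<in> {S. S \<subseteq> V \<and> card S = card W}. W \<subseteq> S}"
  hence "W \<subseteq> S" "finite S" "card W = card S" using finite_subset by auto
  thus "S \<in> {W}" using card_subset_eq[of S W] by simp
next
  fix S assume "finite V" "W \<subseteq> V" "S \<in> {W}"
  thus "S \<in> {S \<in> {S. S \<subseteq> V \<and> card S = card W}. W \<subseteq> S}" by auto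
qed

lemma ks_empty: "finite W \<Longrightarrow> card W < k \<Longrightarrow> ksubsets W k = {}"
proof -
  assume f: "finite W" "card W < k"
  have "False" if "S \<subseteq> W" "card S = k" for S
  proof -
    have "card S \<le> card W" using card_mono[OF f(1) that(1)] .
    thus False using f(2) that(2) by linarith
  qed
  thus ?thesis unfolding ksubsets_def by blast
qed

lemma swap_O:
  assumes "finite S" "a \<in> S" "b \<notin> S"
  shows "a \<in> W \<Longrightarrow> b \<notin> W \<Longrightarrow> card (insert b (S - {a}) \<inter> W) = card (S \<inter> W) - 1"
    and "a \<notin> W \<Longrightarrow> b \<in> W \<Longrightarrow> card (insert b (S - {a}) \<inter> W) = card (S \<inter> W) + 1"
    and "a \<in> W \<Longrightarrow> b \<in> W \<Longrightarrow> card (insert b (S - {a}) \<inter> W) = card (S \<inter> W)"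
    and "a \<notin> W \<Longrightarrow> b \<notin> W \<Longrightarrow> card (insert b (S - {a}) \<inter> W) = card (S \<inter> W)"
proof -
  have f: "finite (S \<inter> W)" using assms by simp
  show "a \<in> W \<Longrightarrow> b \<notin> W \<Longrightarrow> card (insert b (S - {a}) \<inter> W) = card (S \<inter> W) - 1"
  proof -
    assume "a \<in> W" "b \<notin> W"
    hence "insert b (S - {a}) \<inter> W = (S \<inter> W) - {a}" by blast
    thus ?thesis using f assms \<open>a \<in> W\<close> by simp
  qed
  show "a \<notin> W \<Longrightarrow> b \<in> W \<Longrightarrow> card (insert b (S - {a}) \<inter> W) = card (S \<inter> W) + 1"
  proof -
    assume "a \<notin> W" "b \<in> W"
    hence "insert b (S - {a}) \<inter> W = insert b (S \<inter> W)" by blast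
    thus ?thesis using f assms by simp
  qed
  show "a \<in> W \<Longrightarrow> b \<in> W \<Longrightarrow> card (insert b (S - {a}) \<inter> W) = card (S \<inter> W)"
  proof -
    assume "a \<in> W" "b \<in> W"
    hence "insert b (S - {a}) \<inter> W = insert b ((S \<inter> W) - {a})" by blast
    moreover have "card (S \<inter> W) > 0" using f assms \<open>a \<in> W\<close> card_gt_0_iff by blast
    ultimately show ?thesis using f assms \<open>a \<in> W\<close> by (simp add: card_insert_if)
  qed
  show "a \<notin> W \<Longrightarrow> b \<notin> W \<Longrightarrow> card (insert b (S - {a}) \<inter> W) = card (S \<inter> W)"
  proof -
    assume "a \<notin> W" "b \<notin> W"
    hence "insert b (S - {a}) \<inter> W = S \<inter> W" by blast
    thus ?thesis by simp
  qed
qed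

lemma inv_card:
  assumes "g permutes V" "g ` W = W"
  shows "card (g ` S \<inter> W) = card (S \<inter> W)"
proof -
  have inj: "inj g" using assms permutes_inj by blast
  have "g ` S \<inter> W = g ` (S \<inter> W)" using assms(2) inj by (metis image_Int)
  thus ?thesis using inj by (simp add: card_image inj_on_subset)
qed

lemma main_O:
  assumes fin: "finite V"
    and k2: "2 \<le> k" and kV: "k + 2 \<le> card V"
    and code: "is_code V k \<Gamma>"
    and grp: "perm_group_on V G"
    and nt: "neighbour_transitive V k G \<Gamma>"
    and WV: "W \<subseteq> V" "W \<noteq> {}" "W \<noteq> V"
    and Oinv: "\<forall>g\<in>G. g ` W = W"
    and S0: "S0 \<in> \<Gamma>" and a0: "a0 \<in> S0 \<inter> W" and b0: "b0 \<in> V - W - S0"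
  shows "\<exists>U. U \<subset> V \<and> U \<noteq> {} \<and>
           (card U > k \<longrightarrow> \<Gamma> = ksubsets U k) \<and>
           (card U = k \<longrightarrow> \<Gamma> = {U}) \<and>
           (card U < k \<longrightarrow> \<Gamma> = {S \<in> ksubsets V k. U \<subseteq> S})"
proof -
  define f where "f S = card (S \<inter> W)" for S
  have GS: "\<Gamma> \<subseteq> ksubsets V k" "\<Gamma> \<noteq> {}" using code unfolding is_code_def by auto
  have memG: "S \<subseteq> V \<and> card S = k \<and> finite S" if "S \<in> \<Gamma>" for S
  proof -
    have "S \<subseteq> V" "card S = k" using GS(1) that unfolding ksubsets_def by auto
    thus ?thesis using fin finite_subset by blast
  qed
  have fconst: "f S = f T" if ST: "S \<in> \<Gamma>" "T \<in> \<Gamma>" for S T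
  proof -
    have st: "set_transitive G \<Gamma>" using nt unfolding neighbour_transitive_def by simp
    obtain g where g: "g \<in> G" "g ` S = T" using st ST unfolding set_transitive_def by meson
    have "g permutes V" using grp g unfolding perm_group_on_def by simp
    hence "card (g ` S \<inter> W) = card (S \<inter> W)" using inv_card Oinv g(1) by blast
    thus ?thesis using g(2) unfolding f_def by simp
  qed
  have f1const: "f S = f T" if ST: "S \<in> neighbour_set V k \<Gamma>" "T \<in> neighbour_set V k \<Gamma>" for S T
  proof -
    have st: "set_transitive G (neighbour_set V k \<Gamma>)" using nt unfolding neighbour_transitive_def by simp
    obtain g where g: "g \<in> G" "g ` S = T" using st ST unfolding set_transitive_def by meson
    have "g permutes V" using grp g unfolding perm_group_on_def by simp
    hence "card (g ` S \<inter> W) = card (S \<inter> W)" using inv_card Oinv g(1) by blast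
    thus ?thesis using g(2) unfolding f_def by simp
  qed
  have swapN: "insert b (S - {a}) \<in> neighbour_set V k \<Gamma>"
    if "S \<in> \<Gamma>" "a \<in> S" "b \<in> V - S" "insert b (S - {a}) \<notin> \<Gamma>" for S a b
  proof -
    have m: "S \<subseteq> V" "card S = k" "finite S" using memG that(1) by auto
    have "insert b (S - {a}) \<in> ksubsets V k"
      using swap_card(1)[OF m(3) that(2)] that m unfolding ksubsets_def by auto
    moreover have "johnson_adj k S (insert b (S - {a}))"
      using swap_card(2)[OF m(3) that(2)] that m unfolding johnson_adj_def by auto
    ultimately show ?thesis using that unfolding neighbour_set_def by blast
  qed
  have mS0: "S0 \<subseteq> V" "card S0 = k" "finite S0" using memG S0 by auto
  define T0 where "T0 = insert b0 (S0 - {a0})"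
  have fT0: "f T0 = f S0 - 1" using swap_O(1)[OF mS0(3), of a0 b0 W] a0 b0
    unfolding T0_def f_def by blast
  have fS0pos: "f S0 \<ge> 1" unfolding f_def using a0 mS0(3)
    by (metis One_nat_def Suc_leI card_gt_0_iff empty_iff finite_Int)
  have T0G: "T0 \<notin> \<Gamma>"
  proof
    assume "T0 \<in> \<Gamma>" hence "f S0 = f T0" using fconst[OF S0] by blast
    thus False using fT0 fS0pos by simp
  qed
  have T0N: "T0 \<in> neighbour_set V k \<Gamma>" using swapN[OF S0, of a0 b0] a0 b0 T0G
    unfolding T0_def by blast
  have other: "S0 \<subseteq> W \<or> W \<subseteq> S0"
  proof (rule ccontr)
    assume "\<not> (S0 \<subseteq> W \<or> W \<subseteq> S0)"
    then obtain a b where ab: "a \<in> S0" "a \<notin> W" "b \<in> W" "b \<notin> S0" by blast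
    define T1 where "T1 = insert b (S0 - {a})"
    have fT1: "f T1 = f S0 + 1" using swap_O(2)[OF mS0(3), of a b W] ab
      unfolding T1_def f_def by blast
    have "T1 \<notin> \<Gamma>"
    proof
      assume "T1 \<in> \<Gamma>" hence "f S0 = f T1" using fconst[OF S0] by blast
      thus False using fT1 by simp
    qed
    hence "T1 \<in> neighbour_set V k \<Gamma>" using swapN[OF S0, of a b] ab WV unfolding T1_def by blast
    hence "f T1 = f T0" using f1const T0N by blast
    thus False using fT1 fT0 fS0pos by simp
  qed
  have closed: "insert b (S - {a}) \<in> \<Gamma>"
    if "S \<in> \<Gamma>" "a \<in> S" "b \<in> V - S" "a \<in> W \<longleftrightarrow> b \<in> W" for S a b
  proof (rule ccontr)
    assume n: "insert b (S - {a}) \<notin> \<Gamma>"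
    have m: "finite S" using memG that(1) by auto
    have "f (insert b (S - {a})) = f S"
      using swap_O(3,4)[OF m that(2), of b W] that unfolding f_def by blast
    moreover have "f (insert b (S - {a})) = f T0" using f1const swapN[OF that(1-3) n] T0N by blast
    ultimately show False using fconst[OF S0 that(1)] fT0 fS0pos by simp
  qed
  have finO: "finite W" using WV fin finite_subset by blast
  from other show ?thesis
  proof
    assume sub0: "S0 \<subseteq> W"
    have fk: "f S0 = k" using sub0 mS0 unfolding f_def by (simp add: Int_absorb2)
    have GO: "\<Gamma> \<subseteq> {S. S \<subseteq> W \<and> card S = k \<and> {} \<subseteq> S}"
    proof
      fix S assume S: "S \<in> \<Gamma>"
      have m: "S \<subseteq> V" "card S = k" "finite S" using memG S by auto
      have "card (S \<inter> W) = card S" using fconst[OF S0 S] fk m unfolding f_def by simp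
      hence "S \<inter> W = S" using m(3) by (metis Int_lower1 card_subset_eq)
      thus "S \<in> {S. S \<subseteq> W \<and> card S = k \<and> {} \<subseteq> S}" using m by blast
    qed
    have cl: "\<forall>S\<in>\<Gamma>. \<forall>a\<in>S-{}. \<forall>b\<in>W-S. insert b (S-{a}) \<in> \<Gamma>"
    proof (intro ballI)
      fix S a b assume h: "S \<in> \<Gamma>" "a \<in> S - {}" "b \<in> W - S"
      have "S \<subseteq> W" using GO h(1) by blast
      hence "a \<in> W" "b \<in> W" "b \<in> V - S" using h WV(1) by blast+
      thus "insert b (S-{a}) \<in> \<Gamma>" using closed[of S a b] h by blast
    qed
    have eq: "\<Gamma> = ksubsets W k" using conn[OF finO GS(2) GO cl] unfolding ksubsets_def by simp
    show ?thesis
    proof (intro exI[of _ W] conjI impI)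
      show "W \<subset> V" using WV by blast
      show "W \<noteq> {}" by (rule WV(2))
      show "\<Gamma> = ksubsets W k" by (rule eq)
      assume "card W = k"
      thus "\<Gamma> = {W}" using eq ks_single[OF finO] by simp
    next
      assume "card W < k"
      hence "ksubsets W k = {}" using finO ks_empty by blast
      thus "\<Gamma> = {S \<in> ksubsets V k. W \<subseteq> S}" using eq GS by simp
    qed
  next
    assume sub0: "W \<subseteq> S0"
    have fk: "f S0 = card W" using sub0 unfolding f_def by (simp add: Int_absorb1)
    have GO: "\<Gamma> \<subseteq> {S. S \<subseteq> V \<and> card S = k \<and> W \<subseteq> S}"
    proof
      fix S assume S: "S \<in> \<Gamma>"
      have m: "S \<subseteq> V" "card S = k" "finite S" using memG S by auto
      have "card (S \<inter> W) = card W" using fconst[OF S0 S] fk unfolding f_def by simp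
      hence "S \<inter> W = W" using finO by (metis Int_lower2 card_subset_eq)
      thus "S \<in> {S. S \<subseteq> V \<and> card S = k \<and> W \<subseteq> S}" using m by blast
    qed
    have cl: "\<forall>S\<in>\<Gamma>. \<forall>a\<in>S-W. \<forall>b\<in>V-S. insert b (S-{a}) \<in> \<Gamma>"
    proof (intro ballI)
      fix S a b assume h: "S \<in> \<Gamma>" "a \<in> S - W" "b \<in> V - S"
      have "W \<subseteq> S" using GO h(1) by blast
      hence "a \<notin> W" "b \<notin> W" using h by blast+
      thus "insert b (S-{a}) \<in> \<Gamma>" using closed[of S a b] h by blast
    qed
    have eq: "\<Gamma> = {S \<in> ksubsets V k. W \<subseteq> S}"
      using conn[OF fin GS(2) GO cl] unfolding ksubsets_def by simp
    have cOk: "card W \<le> k" using mS0 sub0 card_mono by metis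
    show ?thesis
    proof (intro exI[of _ W] conjI impI)
      show "W \<subset> V" using WV by blast
      show "W \<noteq> {}" by (rule WV(2))
      show "\<Gamma> = {S \<in> ksubsets V k. W \<subseteq> S}" by (rule eq)
      assume "card W = k"
      thus "\<Gamma> = {W}" using eq ks_single2[OF fin WV(1)] by simp
    next
      assume "k < card W" thus "\<Gamma> = ksubsets W k" using cOk by simp
    qed
  qed
qed

theorem proposition3p3:
  fixes V :: "'a set" and k :: nat and \<Gamma> :: "'a set set" and G :: "('a \<Rightarrow> 'a) set"
  assumes "finite V"
    and "2 \<le> k" and "k + 2 \<le> card V"
    and "is_code V k \<Gamma>"
    and "perm_group_on V G"
    and "stabilises G \<Gamma>"
    and "neighbour_transitive V k G \<Gamma>"
    and "\<not> point_transitive G V"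
  shows "\<exists>U. U \<subset> V \<and> U \<noteq> {} \<and>
           (card U > k \<longrightarrow> \<Gamma> = ksubsets U k) \<and>
           (card U = k \<longrightarrow> \<Gamma> = {U}) \<and>
           (card U < k \<longrightarrow> \<Gamma> = {S \<in> ksubsets V k. U \<subseteq> S})"
proof -
  obtain x y where xy: "x \<in> V" "y \<in> V" "\<forall>g\<in>G. g x \<noteq> y"
    using assms(8) unfolding point_transitive_def by blast
  define W where "W = (\<lambda>g. g x) ` G"
  have grp: "\<forall>g\<in>G. g permutes V" "id \<in> G" "\<forall>g\<in>G. \<forall>h\<in>G. g \<circ> h \<in> G" "\<forall>g\<in>G. inv g \<in> G"
    using assms(5) unfolding perm_group_on_def by auto
  have WV: "W \<subseteq> V"
  proof
    fix z assume "z \<in> W"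
    then obtain g where g: "g \<in> G" "z = g x" unfolding W_def by blast
    have "g permutes V" using grp(1) g(1) by blast
    thus "z \<in> V" using g(2) xy(1) permutes_in_image by metis
  qed
  have xO: "x \<in> W" unfolding W_def using grp(2) by (metis id_apply image_eqI)
  have yO: "y \<notin> W" unfolding W_def using xy by blast
  have Oinv: "\<forall>g\<in>G. g ` W = W"
  proof
    fix h assume h: "h \<in> G"
    show "h ` W = W"
    proof
      show "h ` W \<subseteq> W"
      proof
        fix z assume "z \<in> h ` W"
        then obtain g where g: "g \<in> G" "z = h (g x)" unfolding W_def by blast
        have "h \<circ> g \<in> G" using grp(3) h g(1) by blast
        moreover have "z = (h \<circ> g) x" using g(2) by simp
        ultimately show "z \<in> W" unfolding W_def by blast
      qed
      show "W \<subseteq> h ` W"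
      proof
        fix z assume "z \<in> W"
        then obtain g where g: "g \<in> G" "z = g x" unfolding W_def by blast
        have "z = h ((inv h \<circ> g) x)" using g permutes_inverses(1)[OF grp(1)[rule_format, OF h]] by simp
        moreover have "inv h \<circ> g \<in> G" using grp h g by blast
        ultimately show "z \<in> h ` W" unfolding W_def by blast
      qed
    qed
  qed
  define W' where "W' = V - W"
  have W'inv: "\<forall>g\<in>G. g ` W' = W'"
  proof
    fix g assume g: "g \<in> G"
    have "inj g" using grp(1) g permutes_inj by blast
    hence "g ` (V - W) = g ` V - g ` W" by (simp add: image_set_diff)
    thus "g ` W' = W'" using Oinv g permutes_image grp(1) unfolding W'_def by metis
  qed
  have W'V: "W' \<subseteq> V" "W' \<noteq> {}" "W' \<noteq> V" using WV xO yO xy unfolding W'_def by blast+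
  have WV2: "W \<noteq> {}" "W \<noteq> V" using xO yO xy by blast+
  have nt: "neighbour_transitive V k G \<Gamma>" by (rule assms(7))
  have GS: "\<Gamma> \<subseteq> ksubsets V k" "\<Gamma> \<noteq> {}" using assms(4) unfolding is_code_def by auto
  obtain S0 where S0: "S0 \<in> \<Gamma>" using GS by blast
  have mS0: "S0 \<subseteq> V" "card S0 = k" using GS S0 unfolding ksubsets_def by auto
  have cross: "(\<exists>a b. a \<in> S0 \<inter> W \<and> b \<in> V - W - S0) \<or> (\<exists>a b. a \<in> S0 \<inter> W' \<and> b \<in> V - W' - S0)"
  proof (rule ccontr)
    assume n: "\<not> ?thesis"
    have c1: "S0 \<inter> W = {} \<or> V - W \<subseteq> S0"
    proof (rule ccontr)
      assume "\<not> (S0 \<inter> W = {} \<or> V - W \<subseteq> S0)"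
      then obtain a b where "a \<in> S0 \<inter> W" "b \<in> V - W - S0" by blast
      thus False using n by blast
    qed
    have c2: "S0 \<subseteq> W \<or> W \<subseteq> S0"
    proof (rule ccontr)
      assume "\<not> (S0 \<subseteq> W \<or> W \<subseteq> S0)"
      then obtain a b where ab: "a \<in> S0" "a \<notin> W" "b \<in> W" "b \<notin> S0" by blast
      have "a \<in> S0 \<inter> W'" using ab mS0(1) unfolding W'_def by blast
      moreover have "b \<in> V - W' - S0" using ab WV unfolding W'_def by blast
      ultimately show False using n by blast
    qed
    show False
    proof (cases "S0 \<inter> W = {}")
      case True
      from c2 show False
      proof
        assume "S0 \<subseteq> W" hence "S0 = {}" using True by blast
        thus False using mS0 assms(2) by simp
      next
        assume "W \<subseteq> S0" thus False using True WV2 by blast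
      qed
    next
      case False
      hence sV: "V - W \<subseteq> S0" using c1 by blast
      from c2 show False
      proof
        assume "S0 \<subseteq> W" thus False using sV yO xy by blast
      next
        assume "W \<subseteq> S0" hence "S0 = V" using sV mS0 by blast
        thus False using mS0 assms(3) by simp
      qed
    qed
  qed
  thus ?thesis
  proof
    assume "\<exists>a b. a \<in> S0 \<inter> W \<and> b \<in> V - W - S0"
    then obtain a b where ab: "a \<in> S0 \<inter> W" "b \<in> V - W - S0" by blast
    show ?thesis by (rule main_O[OF assms(1-5) nt WV WV2 Oinv S0 ab])
  next
    assume "\<exists>a b. a \<in> S0 \<inter> W' \<and> b \<in> V - W' - S0"
    then obtain a b where ab: "a \<in> S0 \<inter> W'" "b \<in> V - W' - S0" by blast
    show ?thesis by (rule main_O[OF assms(1-5) nt W'V W'inv S0 ab])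
  qed
qed

end
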